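(* Let $(W,V)$ be an independent-type $\mathcal Y$-valued transition matrix on $\mathcal X$ with $W(x|x')=\frac1d$ for all $x,x'\in\mathcal X$, and let $P$ be a distribution on $\mathcal X$. Then $$\mathcal L^I_{2,W,V}=\big\{([W,A],(A^TV_y)_{y\in\mathcal Y})\in\mathcal G^I:\ A\in M_d(\mathbb R),\ A^Tu_{\mathcal X}=0\big\},$$ $$\mathcal L^I_{2,P,W,V}=\big\{([W,A],(A^TV_y)_{y\in\mathcal Y})\in\mathcal G^I:\ A\in M_d(\mathbb R),\ A^Tu_{\mathcal X}=0,\ AP=0\big\},$$ where $[X,Y]=XY-YX$.
   Context: Let $\mathcal X=\{1,\dots,d\}$, $\mathcal Y=\{1,\dots,d_Y\}$, $u_{\mathcal X}\in\mathbb R^{\mathcal X}$ the all-ones vector. An independent-type $\mathcal Y$-valued transition matrix $(W,V)$ consists of a column-stochastic $d\times d$ matrix $W(x|x')$ and a transition matrix $V$ from $\mathcal X$ to $\mathcal Y$ ($V(y|x')\ge0$, $\sum_yV(y|x')=1$), defining $W_y:=WD(V_y)$, where $V_y\in\mathbb R^{\mathcal X}$, $V_y(x')=V(y|x')$, and $D(v)$ is the diagonal matrix with diagonal $v$. $\mathcal G^I$ is the set of pairs $(B,C)$ with $B$ a real $d\times d$ matrix vanishing wherever $W(x|x')=0$ and $C=(C_y)_{y\in\mathcal Y}$, $C_y\in\mathbb R^{\mathcal X}$, $C_y(x')=0$ wherever $V(y|x')=0$. $\mathcal L^I_{1,W,V}:=\{(B,C)\in\mathcal G^I: B^Tu_{\mathcal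 X}=0,\ \sum_yC_y=0\}$. Let $\mathcal L_2:=\{(W_yA-AW_y)_{y\in\mathcal Y}: A\in M_d(\mathbb R),\ A^Tu_{\mathcal X}=0\}$ and $\mathcal L_{2,P}:=\{(W_yA-AW_y)_{y}: A^Tu_{\mathcal X}=0,\ AP=0\}$. Then $\mathcal L^I_{2,W,V}:=\{(B,C)\in\mathcal L^I_{1,W,V}: (BD(V_y)+WD(C_y))_{y}\in\mathcal L_2\}$ and $\mathcal L^I_{2,P,W,V}:=\{(B,C)\in\mathcal L^I_{1,W,V}:(BD(V_y)+WD(C_y))_y\in\mathcal L_{2,P}\}$. *)

theory Defs
  imports "HOL-Analysis.Analysis"
begin

text \<open>Matrices are real^'x^'x with
  M $ x $ x' the entry in row x, column x'.
  A transition matrix V from X to Y is given as the family (V_y)_y, V y $ x' = V(y|x').\<close>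

definition Dmat :: "real^'n \<Rightarrow> real^'n^'n" where
  "Dmat v = (\<chi> i j. if i = j then v $ i else 0)"

definition uvec :: "real^'n" where
  "uvec = (\<chi> i. 1)"

definition column_stochastic :: "real^'x^'x \<Rightarrow> bool" where
  "column_stochastic W \<longleftrightarrow> (\<forall>x x'. W $ x $ x' \<ge> 0) \<and> (\<forall>x'. (\<Sum>x\<in>UNIV. W $ x $ x') = 1)"

definition transition_XY :: "('y::finite \<Rightarrow> real^'x) \<Rightarrow> bool" where
  "transition_XY V \<longleftrightarrow> (\<forall>y x'. V y $ x' \<ge> 0) \<and> (\<forall>x'. (\<Sum>y\<in>UNIV. V y $ x') = 1)"

definition indep_transition :: "real^'x^'x \<Rightarrow> ('y::finite \<Rightarrow> real^'x) \<Rightarrow> bool" where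
  "indep_transition W V \<longleftrightarrow> column_stochastic W \<and> transition_XY V"

definition Wy :: "real^'x^'x \<Rightarrow> ('y \<Rightarrow> real^'x) \<Rightarrow> 'y \<Rightarrow> real^'x^'x" where
  "Wy W V y = W ** Dmat (V y)"

definition GI :: "real^'x^'x \<Rightarrow> ('y \<Rightarrow> real^'x) \<Rightarrow> ((real^'x^'x) \<times> ('y \<Rightarrow> real^'x)) set" where
  "GI W V = {(B, C). (\<forall>x x'. W $ x $ x' = 0 \<longrightarrow> B $ x $ x' = 0)
                   \<and> (\<forall>y x'. V y $ x' = 0 \<longrightarrow> C y $ x' = 0)}"

definition L1I :: "real^'x^'x \<Rightarrow> ('y::finite \<Rightarrow> real^'x) \<Rightarrow> ((real^'x^'x) \<times> ('y \<Rightarrow> real^'x)) set" where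
  "L1I W V = {(B, C). (B, C) \<in> GI W V \<and> transpose B *v uvec = 0 \<and> (\<Sum>y\<in>UNIV. C y) = 0}"

definition L2 :: "real^'x^'x \<Rightarrow> ('y \<Rightarrow> real^'x) \<Rightarrow> ('y \<Rightarrow> real^'x^'x) set" where
  "L2 W V = {(\<lambda>y. Wy W V y ** A - A ** Wy W V y) | A. transpose A *v uvec = 0}"

definition L2P :: "real^'x \<Rightarrow> real^'x^'x \<Rightarrow> ('y \<Rightarrow> real^'x) \<Rightarrow> ('y \<Rightarrow> real^'x^'x) set" where
  "L2P P W V = {(\<lambda>y. Wy W V y ** A - A ** Wy W V y) | A. transpose A *v uvec = 0 \<and> A *v P = 0}"

definition L2I :: "real^'x^'x \<Rightarrow> ('y::finite \<Rightarrow> real^'x) \<Rightarrow> ((real^'x^'x) \<times> ('y \<Rightarrow> real^'x)) set" where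
  "L2I W V = {(B, C). (B, C) \<in> L1I W V \<and> (\<lambda>y. B ** Dmat (V y) + W ** Dmat (C y)) \<in> L2 W V}"

definition L2PI :: "real^'x \<Rightarrow> real^'x^'x \<Rightarrow> ('y::finite \<Rightarrow> real^'x) \<Rightarrow> ((real^'x^'x) \<times> ('y \<Rightarrow> real^'x)) set" where
  "L2PI P W V = {(B, C). (B, C) \<in> L1I W V \<and> (\<lambda>y. B ** Dmat (V y) + W ** Dmat (C y)) \<in> L2P P W V}"

definition distribution :: "real^'x \<Rightarrow> bool" where
  "distribution P \<longleftrightarrow> (\<forall>x. P $ x \<ge> 0) \<and> (\<Sum>x\<in>UNIV. P $ x) = 1"

definition commutator :: "real^'n^'n \<Rightarrow> real^'n^'n \<Rightarrow> real^'n^'n" where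
  "commutator X Y = X ** Y - Y ** X"

end

theory Submission imports Defs begin
lemma Dr: "(B ** Dmat v) $ i $ j = B$i$j * v$j"
  by (simp add: matrix_matrix_mult_def Dmat_def if_distrib cong: if_cong)
lemma Dr': "(\<Sum>k\<in>UNIV. X$i$k * Dmat v $ k $ j) = X$i$j * v$j"
  using Dr[of X v i j] by (simp add: matrix_matrix_mult_def)
lemma MM: "(X ** Y) $ i $ j = (\<Sum>k\<in>UNIV. X$i$k * Y$k$j)"
  by (simp add: matrix_matrix_mult_def)
lemma colsum: "(transpose A *v uvec) $ j = (\<Sum>k\<in>UNIV. A$k$j)"
  by (simp add: matrix_vector_mult_def transpose_def uvec_def)
lemma tmv: "(transpose A *v v) $ j = (\<Sum>k\<in>UNIV. A$k$j * v$k)"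
  by (simp add: matrix_vector_mult_def transpose_def)

lemma vmt: "(v v* (A::real^'n^'m)) $ j = (\<Sum>k\<in>UNIV. A$k$j * v$k)"
  unfolding vector_matrix_mult_def vec_lambda_beta by (rule sum.cong[OF refl]) (rule mult.commute)
lemma WyA: "(Wy W V y ** A) $ i $ j = (\<Sum>k\<in>UNIV. W$i$k * V y $ k * A$k$j)"
  by (simp add: Wy_def MM Dr')
lemma AWy: "(A ** Wy W V y) $ i $ j = (\<Sum>k\<in>UNIV. A$i$k * W$k$j) * V y $ j"
  by (simp add: Wy_def MM Dr' sum_distrib_right mult.assoc)

lemma comm_entry:
  fixes W :: "real^'x^'x"
  assumes W: "\<forall>x x'. W $ x $ x' = 1 / real CARD('x)"
    and Au: "transpose A *v uvec = 0"
  shows "commutator W A $ i $ j = - (\<Sum>k\<in>UNIV. A$i$k) / real CARD('x)"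
proof -
  have c: "(\<Sum>k\<in>UNIV. A$k$j) = 0" using Au colsum[of A j] by simp
  have "(\<Sum>k\<in>UNIV. W$i$k * A$k$j) = (\<Sum>k\<in>UNIV. A$k$j) / real CARD('x)"
    using W by (simp add: sum_divide_distrib)
  moreover have "(\<Sum>k\<in>UNIV. A$i$k * W$k$j) = (\<Sum>k\<in>UNIV. A$i$k) / real CARD('x)"
    using W by (simp add: sum_divide_distrib)
  ultimately show ?thesis using c by (simp add: commutator_def MM)
qed

lemma key_fwd:
  fixes W :: "real^'x^'x" and V :: "'y::finite \<Rightarrow> real^'x"
  assumes W: "\<forall>x x'. W $ x $ x' = 1 / real CARD('x)"
    and V: "\<forall>x'. (\<Sum>y\<in>UNIV. V y $ x') = 1"
    and Cs: "(\<Sum>y\<in>UNIV. C y) = 0" and Au: "transpose A *v uvec = 0"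
    and eq: "\<forall>y. B ** Dmat (V y) + W ** Dmat (C y) = Wy W V y ** A - A ** Wy W V y"
  shows "B = commutator W A \<and> C = (\<lambda>y. transpose A *v V y)"
proof -
  have e: "B$i$j * V y $ j + W$i$j * C y $ j
      = (\<Sum>k\<in>UNIV. W$i$k * V y $ k * A$k$j) - (\<Sum>k\<in>UNIV. A$i$k * W$k$j) * V y $ j"
    for i j y
  proof -
    have "(B ** Dmat (V y) + W ** Dmat (C y)) $ i $ j = (Wy W V y ** A - A ** Wy W V y) $ i $ j"
      using eq by simp
    thus ?thesis by (simp add: Dr WyA AWy)
  qed
  have cs: "(\<Sum>y\<in>UNIV. C y $ j) = 0" for j
    using Cs by (metis sum_component zero_index)
  have B: "B = commutator W A"
  proof (intro vec_eq_iff[THEN iffD2] allI)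
    fix i j
    have "(\<Sum>y\<in>UNIV. B$i$j * V y $ j + W$i$j * C y $ j)
       = (\<Sum>y\<in>UNIV. (\<Sum>k\<in>UNIV. W$i$k * V y $ k * A$k$j) - (\<Sum>k\<in>UNIV. A$i$k * W$k$j) * V y $ j)"
      using e by simp
    also have "\<dots> = (\<Sum>k\<in>UNIV. W$i$k * (\<Sum>y\<in>UNIV. V y $ k) * A$k$j) - (\<Sum>k\<in>UNIV. A$i$k * W$k$j) * (\<Sum>y\<in>UNIV. V y $ j)"
    proof -
      have s1: "(\<Sum>y\<in>UNIV. \<Sum>k\<in>UNIV. W$i$k * V y $ k * A$k$j) = (\<Sum>k\<in>UNIV. W$i$k * (\<Sum>y\<in>UNIV. V y $ k) * A$k$j)"
        by (subst sum.swap) (simp add: sum_distrib_left sum_distrib_right)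
      have s2: "(\<Sum>y\<in>UNIV. (\<Sum>k\<in>UNIV. A$i$k * W$k$j) * V y $ j) = (\<Sum>k\<in>UNIV. A$i$k * W$k$j) * (\<Sum>y\<in>UNIV. V y $ j)"
        by (simp add: sum_distrib_left)
      show ?thesis by (simp only: sum_subtractf s1 s2)
    qed
    finally have "B$i$j = (\<Sum>k\<in>UNIV. W$i$k * A$k$j) - (\<Sum>k\<in>UNIV. A$i$k * W$k$j)"
      using V cs by (simp add: sum.distrib sum_distrib_left[symmetric] sum_distrib_left[of "B$i$j", symmetric])
    thus "B $ i $ j = commutator W A $ i $ j" by (simp add: commutator_def MM)
  qed
  have C: "C y $ j = (transpose A *v V y) $ j" for y j
  proof -
    obtain i :: 'x where True by simp
    have d: "real CARD('x) > 0" by simp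
    have "B$i$j = - (\<Sum>k\<in>UNIV. A$i$k) / real CARD('x)" using B comm_entry[OF W Au] by simp
    with e[of i j y] W have
      "- (\<Sum>k\<in>UNIV. A$i$k) / real CARD('x) * V y $ j + C y $ j / real CARD('x)
       = (\<Sum>k\<in>UNIV. V y $ k * A$k$j) / real CARD('x) - (\<Sum>k\<in>UNIV. A$i$k) / real CARD('x) * V y $ j"
      by (simp add: sum_divide_distrib sum_distrib_right mult.commute)
    hence "C y $ j / real CARD('x) = (\<Sum>k\<in>UNIV. V y $ k * A$k$j) / real CARD('x)" by simp
    hence "C y $ j = (\<Sum>k\<in>UNIV. V y $ k * A$k$j)" using d by (simp add: divide_cancel_right)
    thus ?thesis unfolding tmv by (simp add: mult.commute)
  qed
  show ?thesis using B C by (simp add: vec_eq_iff fun_eq_iff)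
qed
lemma key_bwd:
  fixes W :: "real^'x^'x" and V :: "'y::finite \<Rightarrow> real^'x"
  assumes W: "\<forall>x x'. W $ x $ x' = 1 / real CARD('x)"
    and V: "\<forall>x'. (\<Sum>y\<in>UNIV. V y $ x') = 1"
    and Au: "transpose A *v uvec = 0"
  shows "transpose (commutator W A) *v uvec = 0"
    and "(\<Sum>y\<in>UNIV. transpose A *v V y) = 0"
    and "\<forall>y. commutator W A ** Dmat (V y) + W ** Dmat (transpose A *v V y) = Wy W V y ** A - A ** Wy W V y"
proof -
  have c: "(\<Sum>k\<in>UNIV. A$k$j) = 0" for j using Au colsum[of A j] by simp
  show "transpose (commutator W A) *v uvec = 0"
  proof (intro vec_eq_iff[THEN iffD2] allI)
    fix j
    have "(transpose (commutator W A) *v uvec) $ j = (\<Sum>i\<in>UNIV. - (\<Sum>k\<in>UNIV. A$i$k) / real CARD('x))"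
      unfolding colsum comm_entry[OF W Au] by simp
    also have "\<dots> = - (\<Sum>i\<in>UNIV. \<Sum>k\<in>UNIV. A$i$k) / real CARD('x)"
      by (simp add: sum_divide_distrib[symmetric] sum_negf)
    also have "\<dots> = - (\<Sum>k\<in>UNIV. \<Sum>i\<in>UNIV. A$i$k) / real CARD('x)"
      by (subst sum.swap) (rule refl)
    also have "\<dots> = 0" using c by simp
    finally show "(transpose (commutator W A) *v uvec) $ j = 0 $ j" by simp
  qed
  show "(\<Sum>y\<in>UNIV. transpose A *v V y) = 0"
  proof (intro vec_eq_iff[THEN iffD2] allI)
    fix j
    have "(\<Sum>y\<in>UNIV. transpose A *v V y) $ j = (\<Sum>y\<in>UNIV. \<Sum>k\<in>UNIV. A$k$j * V y $ k)"
      by (simp only: sum_component tmv)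
    also have "\<dots> = (\<Sum>k\<in>UNIV. A$k$j * (\<Sum>y\<in>UNIV. V y $ k))"
      by (subst sum.swap) (simp add: sum_distrib_left)
    also have "\<dots> = 0" using c V by simp
    finally show "(\<Sum>y\<in>UNIV. transpose A *v V y) $ j = 0 $ j" by simp
  qed
  show "\<forall>y. commutator W A ** Dmat (V y) + W ** Dmat (transpose A *v V y) = Wy W V y ** A - A ** Wy W V y"
  proof (intro allI vec_eq_iff[THEN iffD2])
    fix y i j
    have "(commutator W A ** Dmat (V y) + W ** Dmat (transpose A *v V y)) $ i $ j
      = - (\<Sum>k\<in>UNIV. A$i$k) / real CARD('x) * V y $ j + (\<Sum>k\<in>UNIV. A$k$j * V y $ k) / real CARD('x)"
      using W by (simp add: Dr comm_entry[OF W Au] tmv vmt)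
    also have "\<dots> = (Wy W V y ** A - A ** Wy W V y) $ i $ j"
    proof -
      have 1: "(Wy W V y ** A) $ i $ j = (\<Sum>k\<in>UNIV. A$k$j * V y $ k) / real CARD('x)"
        unfolding WyA using W by (simp add: sum_divide_distrib mult.commute)
      have 2: "(A ** Wy W V y) $ i $ j = (\<Sum>k\<in>UNIV. A$i$k) / real CARD('x) * V y $ j"
        unfolding AWy using W by (simp add: sum_divide_distrib)
      show ?thesis using 1 2 by (simp add: algebra_simps)
    qed
    finally show "(commutator W A ** Dmat (V y) + W ** Dmat (transpose A *v V y)) $ i $ j = (Wy W V y ** A - A ** Wy W V y) $ i $ j" .
  qed
qed

theorem corollary3:
  fixes W :: "real^'x^'x" and V :: "'y::finite \<Rightarrow> real^'x" and P :: "real^'x"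
  assumes "indep_transition W V"
    and "\<forall>x x'. W $ x $ x' = 1 / real CARD('x)"
    and "distribution P"
  shows "(L2I W V = {(B, C). (B, C) \<in> GI W V \<and>
            (\<exists>A. transpose A *v uvec = 0 \<and> B = commutator W A \<and> C = (\<lambda>y. transpose A *v V y))})
    \<and> (L2PI P W V = {(B, C). (B, C) \<in> GI W V \<and>
            (\<exists>A. transpose A *v uvec = 0 \<and> A *v P = 0 \<and> B = commutator W A \<and> C = (\<lambda>y. transpose A *v V y))})"
proof -
  note W = assms(2)
  have V: "\<forall>x'. (\<Sum>y\<in>UNIV. V y $ x') = 1"
    using assms(1) by (simp add: indep_transition_def transition_XY_def)
  have fwd: "B = commutator W A \<and> C = (\<lambda>y. transpose A *v V y)"
    if "(\<Sum>y\<in>UNIV. C y) = 0" "transpose A *v uvec = 0"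
       "(\<lambda>y. B ** Dmat (V y) + W ** Dmat (C y)) = (\<lambda>y. Wy W V y ** A - A ** Wy W V y)" for B C A
    using key_fwd[OF W V that(1,2)] that(3) by (metis)
  note bwd = key_bwd[OF W V]
  have GIa: "(commutator W A, \<lambda>y. transpose A *v V y) \<in> L1I W V" if "(commutator W A, \<lambda>y. transpose A *v V y) \<in> GI W V" "transpose A *v uvec = 0" for A
    using that bwd(1,2)[OF that(2)] by (simp add: L1I_def)
  show ?thesis
  proof (intro conjI set_eqI iffI)
    fix z assume "z \<in> L2I W V"
    then obtain B C A where z: "z = (B, C)" and L1: "(B, C) \<in> L1I W V" and Au: "transpose A *v uvec = 0"
      and eq: "(\<lambda>y. B ** Dmat (V y) + W ** Dmat (C y)) = (\<lambda>y. Wy W V y ** A - A ** Wy W V y)"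
      unfolding L2I_def L2_def by blast
    from L1 have "(\<Sum>y\<in>UNIV. C y) = 0" "(B, C) \<in> GI W V" by (auto simp: L1I_def)
    with fwd[OF this(1) Au eq] z Au show "z \<in> {(B, C). (B, C) \<in> GI W V \<and>
            (\<exists>A. transpose A *v uvec = 0 \<and> B = commutator W A \<and> C = (\<lambda>y. transpose A *v V y))}" by blast
  next
    fix z assume "z \<in> {(B, C). (B, C) \<in> GI W V \<and>
            (\<exists>A. transpose A *v uvec = 0 \<and> B = commutator W A \<and> C = (\<lambda>y. transpose A *v V y))}"
    then obtain A where z: "z = (commutator W A, \<lambda>y. transpose A *v V y)" and G: "z \<in> GI W V"
      and Au: "transpose A *v uvec = 0" by blast
    have "(\<lambda>y. commutator W A ** Dmat (V y) + W ** Dmat (transpose A *v V y)) \<in> L2 W V"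
      unfolding L2_def using bwd(3)[OF Au] Au by blast
    then show "z \<in> L2I W V" using GIa[OF G[unfolded z] Au] z by (simp add: L2I_def)
  next
    fix z assume "z \<in> L2PI P W V"
    then obtain B C A where z: "z = (B, C)" and L1: "(B, C) \<in> L1I W V" and Au: "transpose A *v uvec = 0"
      and AP: "A *v P = 0"
      and eq: "(\<lambda>y. B ** Dmat (V y) + W ** Dmat (C y)) = (\<lambda>y. Wy W V y ** A - A ** Wy W V y)"
      unfolding L2PI_def L2P_def by blast
    from L1 have "(\<Sum>y\<in>UNIV. C y) = 0" "(B, C) \<in> GI W V" by (auto simp: L1I_def)
    with fwd[OF this(1) Au eq] z Au AP show "z \<in> {(B, C). (B, C) \<in> GI W V \<and>
            (\<exists>A. transpose A *v uvec = 0 \<and> A *v P = 0 \<and> B = commutator W A \<and> C = (\<lambda>y. transpose A *v V y))}" by blast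
  next
    fix z assume "z \<in> {(B, C). (B, C) \<in> GI W V \<and>
            (\<exists>A. transpose A *v uvec = 0 \<and> A *v P = 0 \<and> B = commutator W A \<and> C = (\<lambda>y. transpose A *v V y))}"
    then obtain A where z: "z = (commutator W A, \<lambda>y. transpose A *v V y)" and G: "z \<in> GI W V"
      and Au: "transpose A *v uvec = 0" and AP: "A *v P = 0" by blast
    have "(\<lambda>y. commutator W A ** Dmat (V y) + W ** Dmat (transpose A *v V y)) \<in> L2P P W V"
      unfolding L2P_def using bwd(3)[OF Au] Au AP by blast
    then show "z \<in> L2PI P W V" using GIa[OF G[unfolded z] Au] z by (simp add: L2PI_def)
  qed
qed
end
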